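(* Let $\lambda>0$. There is a constant $C$ depending only on $\lambda$ such that for all $b\in(-1,1)$, $$\int_{-1}^1(1-bs)^{-\lambda-1}(1-s)(1-s^2)^{\lambda-1}ds\le\frac{C}{1-|b|}.$$ *)

theory Defs
  imports "HOL-Analysis.Analysis"
begin

end

theory Submission
  imports Defs
begin


definition hh :: "real \<Rightarrow> real \<Rightarrow> real \<Rightarrow> real" where
  "hh a lam t = (a + t) powr (- lam - 1) * t powr (lam - 1)"

lemma hh_alg:
  assumes "a > 0" "u > 0"
  shows "lam * (u / (a + u)) powr (lam - 1) * (a / (a + u)^2) = lam * a * hh a lam u"
proof -
  have p: "a + u > 0" using assms by simp
  define P where "P = (a + u) powr (lam - 1)"
  have P: "P > 0" using p by (simp add: P_def)
  have c1: "lam + 1 = (lam - 1) + 2" by simp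
  have c2: "(a + u) powr (2::real) = (a + u) ^ 2" using p by (intro powr_numeral) simp
  have "(a + u) powr (lam + 1) = P * (a+u)^2"
    unfolding P_def c1 powr_add c2 ..
  moreover have "(a + u) powr (- lam - 1) = inverse ((a + u) powr (lam + 1))"
  proof -
    have "- lam - 1 = - (lam + 1)" by simp
    then show ?thesis by (simp only: powr_minus)
  qed
  ultimately have e: "(a + u) powr (- lam - 1) = inverse (P * (a+u)^2)" by simp
  have d: "(u / (a + u)) powr (lam - 1) = u powr (lam - 1) / P"
    using p assms unfolding P_def by (simp add: powr_divide)
  have gen: "\<And>X Q::real. lam * (X / P) * (a / Q) = lam * a * (inverse (P * Q) * X)"
    by (simp add: divide_inverse inverse_mult_distrib mult_ac)
  show ?thesis unfolding hh_def e d by (rule gen)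
qed

lemma hh_deriv:
  assumes "a > 0" "u > 0"
  shows "((\<lambda>u. (u / (a + u)) powr lam) has_real_derivative lam * a * hh a lam u) (at u)"
proof -
  have p: "a + u > 0" using assms by simp
  have "((\<lambda>u. (u / (a + u)) powr lam) has_real_derivative lam * (u / (a + u)) powr (lam - 1) * ((1 * (a + u) - u * 1) / (a + u)^2)) (at u)"
    using assms p
    by (intro derivative_eq_intros refl) (auto simp: power2_eq_square)
  then show ?thesis using hh_alg[OF assms] by simp
qed




lemma hh_nonneg: "0 \<le> hh a lam t" by (simp add: hh_def)

lemma hh_cont: "a > 0 \<Longrightarrow> t > 0 \<Longrightarrow> isCont (hh a lam) t"
  unfolding hh_def by (intro continuous_intros) auto

lemma int_plus:
  assumes a: "a > 0" and l: "lam > 0"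
  shows "set_integrable lborel {-1<..<1} (\<lambda>s. hh a lam (1 + s))"
    "(LBINT s:{-1<..<1}. hh a lam (1 + s)) \<le> 1 / (lam * a)"
proof -
  define F where "F s = ((1 + s) / (a + (1 + s))) powr lam / (lam * a)" for s
  have D: "DERIV F x :> hh a lam (1 + x)" if "ereal (-1) < ereal x" "ereal x < ereal 1" for x
  proof -
    have x: "1 + x > 0" using that by simp
    have "DERIV (\<lambda>x. ((1 + x) / (a + (1 + x))) powr lam) x :> lam * a * hh a lam (1 + x) * 1"
      proof -
      have g: "((\<lambda>x. 1 + x) has_real_derivative 1) (at x)" by (auto intro!: derivative_eq_intros)
      show ?thesis
        using DERIV_chain2[where f="\<lambda>u. (u / (a + u)) powr lam" and g="\<lambda>x. 1 + x", OF hh_deriv[where lam=lam, OF a x] g]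
        by simp
    qed
    then have "DERIV F x :> lam * a * hh a lam (1 + x) * 1 / (lam * a)"
      unfolding F_def by (rule DERIV_cdivide)
    then show ?thesis using a l by simp
  qed
  have C: "isCont (\<lambda>s. hh a lam (1 + s)) x" if "ereal (-1) < ereal x" "ereal x < ereal 1" for x
    using that a by (intro continuous_intros isCont_o2[OF _ hh_cont]) auto
  have A: "((F \<circ> real_of_ereal) \<longlongrightarrow> 0) (at_right (ereal (-1)))"
    unfolding ereal_tendsto_simps F_def
  proof -
    have "((\<lambda>s. ((1 + s) / (a + (1 + s))) powr lam) \<longlongrightarrow> 0) (at_right (-1))"
    proof (rule tendsto_zero_powrI)
      show "((\<lambda>s. (1 + s) / (a + (1 + s))) \<longlongrightarrow> 0) (at_right (- 1))"
        using a by (auto intro!: tendsto_eq_intros)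
      show "\<forall>\<^sub>F x in at_right (- 1). 0 \<le> (1 + x) / (a + (1 + x))"
        unfolding eventually_at_right_field using a
        by (intro exI[of _ 0]) auto
    qed (use l in auto)
    then show "((\<lambda>s. ((1 + s) / (a + (1 + s))) powr lam / (lam * a)) \<longlongrightarrow> 0) (at_right (- 1))"
      by (rule tendsto_divide_zero)
  qed
  have B: "((F \<circ> real_of_ereal) \<longlongrightarrow> F 1) (at_left (ereal 1))"
    unfolding ereal_tendsto_simps
  proof -
    have "isCont F 1" unfolding F_def using a l
      by (intro continuous_intros) (auto simp: divide_simps)
    then have "(F \<longlongrightarrow> F 1) (at 1)" by (simp add: isCont_def)
    then show "(F \<longlongrightarrow> F 1) (at_left 1)" by (rule tendsto_within_subset) simp
  qed
  note R = interval_integral_FTC_nonneg[OF _ D C _ A B]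
  show "set_integrable lborel {-1<..<1} (\<lambda>s. hh a lam (1 + s))"
    using R(1) by (simp add: hh_nonneg)
  have "(LBINT s:{-1<..<1}. hh a lam (1 + s)) = F 1 - 0"
    using R(2) by (simp add: hh_nonneg interval_lebesgue_integral_def)
  also have "\<dots> \<le> 1 / (lam * a)"
  proof -
    have "(2 / (a + 2)) powr lam \<le> 1" using a l by (intro powr_le1) auto
    then have "(2 / (a + 2)) powr lam / (lam * a) \<le> 1 / (lam * a)"
      using a l by (intro divide_right_mono) auto
    moreover have "F 1 - 0 = (2 / (a + 2)) powr lam / (lam * a)" by (simp add: F_def)
    ultimately show ?thesis by simp
  qed
  finally show "(LBINT s:{-1<..<1}. hh a lam (1 + s)) \<le> 1 / (lam * a)" .
qed




lemma int_minus:
  assumes a: "a > 0" and l: "lam > 0"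
  shows "set_integrable lborel {-1<..<1} (\<lambda>s. hh a lam (1 - s))"
    "(LBINT s:{-1<..<1}. hh a lam (1 - s)) \<le> 1 / (lam * a)"
proof -
  define F where "F s = - (((1 - s) / (a + (1 - s))) powr lam / (lam * a))" for s
  have D: "DERIV F x :> hh a lam (1 - x)" if "ereal (-1) < ereal x" "ereal x < ereal 1" for x
  proof -
    have x: "1 - x > 0" using that by simp
    have "DERIV (\<lambda>x. ((1 - x) / (a + (1 - x))) powr lam) x :> lam * a * hh a lam (1 - x) * (-1)"
    proof -
      have g: "((\<lambda>x. 1 - x) has_real_derivative (-1)) (at x)" by (auto intro!: derivative_eq_intros)
      show ?thesis
        using DERIV_chain2[where f="\<lambda>u. (u / (a + u)) powr lam" and g="\<lambda>x. 1 - x", OF hh_deriv[where lam=lam, OF a x] g]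
        by simp
    qed
    then have "DERIV (\<lambda>x. ((1 - x) / (a + (1 - x))) powr lam / (lam * a)) x :> lam * a * hh a lam (1 - x) * (-1) / (lam * a)"
      by (rule DERIV_cdivide)
    then have "DERIV F x :> - (lam * a * hh a lam (1 - x) * (-1) / (lam * a))"
      unfolding F_def by (rule DERIV_minus)
    then show ?thesis using a l by simp
  qed
  have C: "isCont (\<lambda>s. hh a lam (1 - s)) x" if "ereal (-1) < ereal x" "ereal x < ereal 1" for x
    using that a by (intro continuous_intros isCont_o2[OF _ hh_cont]) auto
  have B: "((F \<circ> real_of_ereal) \<longlongrightarrow> 0) (at_left (ereal 1))"
    unfolding ereal_tendsto_simps F_def
  proof -
    have "((\<lambda>s. ((1 - s) / (a + (1 - s))) powr lam) \<longlongrightarrow> 0) (at_left 1)"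
    proof (rule tendsto_zero_powrI)
      show "((\<lambda>s. (1 - s) / (a + (1 - s))) \<longlongrightarrow> 0) (at_left 1)"
        using a by (auto intro!: tendsto_eq_intros)
      show "\<forall>\<^sub>F x in at_left 1. 0 \<le> (1 - x) / (a + (1 - x))"
        unfolding eventually_at_left_field using a
        by (intro exI[of _ 0]) auto
    qed (use l in auto)
    then have m: "((\<lambda>s. ((1 - s) / (a + (1 - s))) powr lam / (lam * a)) \<longlongrightarrow> 0) (at_left 1)"
      by (rule tendsto_divide_zero)
    show "((\<lambda>s. - (((1 - s) / (a + (1 - s))) powr lam / (lam * a))) \<longlongrightarrow> 0) (at_left 1)"
      using tendsto_minus[OF m] by simp
  qed
  have A: "((F \<circ> real_of_ereal) \<longlongrightarrow> F (-1)) (at_right (ereal (-1)))"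
    unfolding ereal_tendsto_simps
  proof -
    have "isCont F (-1)" unfolding F_def using a l
      by (intro continuous_intros) (auto simp: divide_simps)
    then have "(F \<longlongrightarrow> F (-1)) (at (-1))" by (simp add: isCont_def)
    then show "(F \<longlongrightarrow> F (-1)) (at_right (-1))" by (rule tendsto_within_subset) simp
  qed
  note R = interval_integral_FTC_nonneg[OF _ D C _ A B]
  show "set_integrable lborel {-1<..<1} (\<lambda>s. hh a lam (1 - s))"
    using R(1) by (simp add: hh_nonneg)
  have "(LBINT s:{-1<..<1}. hh a lam (1 - s)) = 0 - F (-1)"
    using R(2) by (simp add: hh_nonneg interval_lebesgue_integral_def)
  also have "\<dots> = (2 / (a + 2)) powr lam / (lam * a)"
    unfolding F_def by simp
  also have "\<dots> \<le> 1 / (lam * a)"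
    using a l by (intro divide_right_mono powr_le1) auto
  finally show "(LBINT s:{-1<..<1}. hh a lam (1 - s)) \<le> 1 / (lam * a)" .
qed




definition KK :: "real \<Rightarrow> real" where
  "KK lam = 2 powr (lam + 1) * 2 * max 1 (2 powr (lam - 1))"

lemma KK_pos: "KK lam > 0" unfolding KK_def by simp

lemma pw:
  assumes l: "lam > 0" and b: "-1 < b" "b < 1" and s: "-1 < s" "s < 1"
  shows "(1 - b * s) powr (- lam - 1) * (1 - s) * (1 - s\<^sup>2) powr (lam - 1)
     \<le> KK lam * (hh (1 - \<bar>b\<bar>) lam (1 + s) + hh (1 - \<bar>b\<bar>) lam (1 - s))"
proof -
  define a where "a = 1 - \<bar>b\<bar>"
  define t where "t = 1 - \<bar>s\<bar>"
  define M where "M = max 1 (2 powr (lam - 1))"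
  have a: "0 < a" "a \<le> 1" using b by (auto simp: a_def)
  have t: "0 < t" "t \<le> 1" using s by (auto simp: t_def)
  have h1: "(a + t) / 2 \<le> 1 - b * s"
  proof -
    have "b * s \<le> \<bar>b\<bar> * \<bar>s\<bar>" by (metis abs_ge_self abs_mult)
    moreover have "\<bar>b\<bar> * \<bar>s\<bar> \<le> \<bar>b\<bar>" "\<bar>b\<bar> * \<bar>s\<bar> \<le> \<bar>s\<bar>"
      using b s by (auto intro: mult_left_le mult_left_le_one_le)
    ultimately have "2 * (b * s) \<le> \<bar>b\<bar> + \<bar>s\<bar>" by linarith
    then show ?thesis unfolding a_def t_def by (simp add: field_simps)
  qed
  have at: "0 < (a + t) / 2" using a t by simp
  have h2: "(1 - b * s) powr (- lam - 1) \<le> ((a + t) / 2) powr (- lam - 1)"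
    using h1 at l by (intro powr_mono2') auto
  have h3: "((a + t) / 2) powr (- lam - 1) = 2 powr (lam + 1) * (a + t) powr (- lam - 1)"
  proof -
    have i: "(2::real) powr (- lam - 1) = inverse (2 powr (lam + 1))"
      by (simp add: powr_minus[symmetric])
    have gen: "\<And>x y::real. x / inverse y = y * x" by (simp add: divide_inverse)
    have "((a + t) / 2) powr (- lam - 1) = (a + t) powr (- lam - 1) / 2 powr (- lam - 1)"
      by (rule powr_divide)
    also have "\<dots> = 2 powr (lam + 1) * (a + t) powr (- lam - 1)"
      unfolding i by (rule gen)
    finally show ?thesis .
  qed
  have h4: "(1 - s\<^sup>2) powr (lam - 1) \<le> M * t powr (lam - 1)"
  proof -
    have e0: "t * (2 - t) = 1 - \<bar>s\<bar>\<^sup>2" unfolding t_def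
      by (simp add: algebra_simps power2_eq_square)
    have e: "1 - s\<^sup>2 = t * (2 - t)" unfolding e0 by simp
    have m: "(2 - t) powr (lam - 1) \<le> M"
    proof (cases "lam \<ge> 1")
      case True
      then have "(2 - t) powr (lam - 1) \<le> 2 powr (lam - 1)" using t by (intro powr_mono2) auto
      then show ?thesis unfolding M_def by linarith
    next
      case False
      then have "(2 - t) powr (lam - 1) \<le> 1 powr (lam - 1)" using t by (intro powr_mono2') auto
      then show ?thesis unfolding M_def by simp
    qed
    have "(1 - s\<^sup>2) powr (lam - 1) = t powr (lam - 1) * (2 - t) powr (lam - 1)"
      unfolding e using t by (simp add: powr_mult)
    also have "\<dots> \<le> t powr (lam - 1) * M" using m by (intro mult_left_mono) auto
    finally show ?thesis by (simp add: mult.commute)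
  qed
  have h5: "hh a lam t \<le> hh a lam (1 + s) + hh a lam (1 - s)"
    using hh_nonneg[of a lam "1 + s"] hh_nonneg[of a lam "1 - s"]
    unfolding t_def by (cases "s \<ge> 0") auto
  have "(1 - b * s) powr (- lam - 1) * (1 - s) * (1 - s\<^sup>2) powr (lam - 1)
      \<le> (2 powr (lam + 1) * (a + t) powr (- lam - 1)) * 2 * (M * t powr (lam - 1))"
    using h2 h3 h4 s by (intro mult_mono) auto
  also have "\<dots> = KK lam * hh a lam t"
    unfolding KK_def hh_def M_def by (simp add: ac_simps)
  also have "\<dots> \<le> KK lam * (hh a lam (1 + s) + hh a lam (1 - s))"
    using h5 KK_pos[of lam] by (intro mult_left_mono) auto
  finally show ?thesis unfolding a_def .
qed

lemma meas: "set_borel_measurable lborel {-1<..<1}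
       (\<lambda>s::real. (1 - b * s) powr (- lam - 1) * (1 - s) * (1 - s\<^sup>2) powr (lam - 1))"
  unfolding set_borel_measurable_def measurable_lborel1 by measurable


theorem mainTheorem8:
  fixes lam :: real
  assumes "lam > 0"
  shows "\<exists>C::real. \<forall>b::real. -1 < b \<and> b < 1 \<longrightarrow>
     set_integrable lborel {-1<..<1}
       (\<lambda>s. (1 - b * s) powr (- lam - 1) * (1 - s) * (1 - s\<^sup>2) powr (lam - 1)) \<and>
     (LBINT s:{-1<..<1}. (1 - b * s) powr (- lam - 1) * (1 - s) * (1 - s\<^sup>2) powr (lam - 1))
       \<le> C / (1 - \<bar>b\<bar>)"
proof -
  have l: "lam > 0" using assms .
  define K where "K = KK lam"
  have K: "K > 0" unfolding K_def by (rule KK_pos)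
  show ?thesis
  proof (intro exI[of _ "2 * K / lam"] allI impI)
    fix b :: real
    assume b: "-1 < b \<and> b < 1"
    define a where "a = 1 - \<bar>b\<bar>"
    have a: "a > 0" using b by (auto simp: a_def)
    define f where "f s = (1 - b * s) powr (- lam - 1) * (1 - s) * (1 - s\<^sup>2) powr (lam - 1)" for s
    define g where "g s = K * (hh a lam (1 + s) + hh a lam (1 - s))" for s
    have gi: "set_integrable lborel {-1<..<1} g"
    proof -
      have hs: "set_integrable lborel {-1<..<1} (\<lambda>s. hh a lam (1 + s) + hh a lam (1 - s))"
        by (rule set_integral_add(1)[OF int_plus(1)[OF a l] int_minus(1)[OF a l]])
      show ?thesis unfolding g_def by (rule set_integrable_mult_right) (rule hs)
    qed
    have bound: "f s \<le> g s" if "s \<in> {-1<..<1}" for s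
    proof -
      have s: "-1 < s" "s < 1" using that by auto
      have "f s \<le> KK lam * (hh (1 - \<bar>b\<bar>) lam (1 + s) + hh (1 - \<bar>b\<bar>) lam (1 - s))"
        unfolding f_def by (rule pw[OF l]) (use b s in auto)
      then show ?thesis unfolding g_def K_def a_def .
    qed
    have nn: "0 \<le> f s" if "s \<in> {-1<..<1}" for s
      using that unfolding f_def by (intro mult_nonneg_nonneg) auto
    have fi: "set_integrable lborel {-1<..<1} f"
    proof (rule set_integrable_bound[OF gi])
      show "set_borel_measurable lborel {-1<..<1} f" unfolding f_def by (rule meas)
      show "AE x in lborel. x \<in> {-1<..<1} \<longrightarrow> norm (f x) \<le> norm (g x)"
      proof (intro AE_I2 impI)
        fix x :: real assume x: "x \<in> {-1<..<1}"
        have "f x \<le> g x" "0 \<le> f x" using bound[OF x] nn[OF x] by auto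
        then show "norm (f x) \<le> norm (g x)"
          by (metis abs_of_nonneg abs_ge_self order_trans real_norm_def)
      qed
    qed
    have "(LBINT s:{-1<..<1}. f s) \<le> (LBINT s:{-1<..<1}. g s)"
      by (rule set_integral_mono[OF fi gi bound])
    also have "(LBINT s:{-1<..<1}. g s) = K * ((LBINT s:{-1<..<1}. hh a lam (1 + s)) + (LBINT s:{-1<..<1}. hh a lam (1 - s)))"
      unfolding g_def set_integral_mult_right
      by (rule arg_cong[where f="\<lambda>x. K * x"], rule set_integral_add(2)[OF int_plus(1)[OF a l] int_minus(1)[OF a l]])
    also have "\<dots> \<le> K * (1 / (lam * a) + 1 / (lam * a))"
      using int_plus(2)[OF a l] int_minus(2)[OF a l] K
      by (intro mult_left_mono add_mono) auto
    also have "\<dots> = 2 * K / lam / a" using a l by (simp add: field_simps)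
    finally have "(LBINT s:{-1<..<1}. f s) \<le> 2 * K / lam / (1 - \<bar>b\<bar>)" unfolding a_def .
    moreover have fe: "(\<lambda>s. (1 - b * s) powr (- lam - 1) * (1 - s) * (1 - s\<^sup>2) powr (lam - 1)) = f"
      by (rule ext) (simp only: f_def)
    ultimately show "set_integrable lborel {-1<..<1}
       (\<lambda>s. (1 - b * s) powr (- lam - 1) * (1 - s) * (1 - s\<^sup>2) powr (lam - 1)) \<and>
     (LBINT s:{-1<..<1}. (1 - b * s) powr (- lam - 1) * (1 - s) * (1 - s\<^sup>2) powr (lam - 1))
       \<le> 2 * K / lam / (1 - \<bar>b\<bar>)"
      using fi by (simp only: fe)
  qed
qed

end
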